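(* Let $n\ge 1$ be a natural number and let $F$ be an $n$-perturbation on $H^2(\mathbb{D})$ (defined in the context), and put $S_n = M_z + F$. Then: (i) $F(z^m f) = 0$ for each $m \geq n$ and each $f \in H^2(\mathbb{D})$; (ii) for each $f \in H^2(\mathbb{D})$ and each $m \geq 1$ there exists a polynomial $p \in \mathbb{C}[z]$ (depending on $f$ and $m$) such that $S_n^m f = z^m (f + p)$; (iii) $S_n$ is a shift on some analytic Hilbert space, i.e. $S_n$ is unitarily equivalent to the multiplication operator $M_z$ on some analytic Hilbert space.
   Context: $H^2(\mathbb{D})$ is the Hardy space on the open unit disc $\mathbb{D}$ and $M_z$ is the unilateral shift (multiplication by $z$) on it. All operators are bounded linear operators. A linear operator $F$ on $H^2(\mathbb{D})$ is called an $n$-perturbation if (a) $Fz^m = 0$ for all $m \ge n$; (b) $F(z^m H^2(\mathbb{D})) \subseteq z^{m+1}\mathbb{C}[z]$ for all $m \ge 0$; and (c) $M_z + F$ is left-invertible. An analytic Hilbert space is a reproducing kernel Hilbert space $\mathcal{H}_k$ of $\mathcal{E}$-valued analytic functions on $\mathbb{D}$ (for some Hilbert space $\mathcal{E}$) associated with a positive definite kernel $k:\mathbb{D}\times\mathbb{D}\to\mathcal{B}(\mathcal{E})$ analytic in the first variable, on which the multiplication operator $(M_zf)(w)=wf(w)$ is bounded. *)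

theory Defs
  imports "HOL-Complex_Analysis.Complex_Analysis" "HOL-Computational_Algebra.Polynomial"
begin

text \<open>Functions on the open unit disc D are represented as total functions
  complex => complex that vanish outside D (so that equality of elements
  is equality on D).\<close>

definition onD :: "(complex \<Rightarrow> complex) \<Rightarrow> complex \<Rightarrow> complex" where
  "onD g = (\<lambda>w. if w \<in> ball 0 1 then g w else 0)"

definition disc_fun :: "(complex \<Rightarrow> complex) \<Rightarrow> bool" where
  "disc_fun f \<longleftrightarrow> f holomorphic_on ball 0 1 \<and> (\<forall>w. w \<notin> ball 0 1 \<longrightarrow> f w = 0)"

definition tcoeff :: "(complex \<Rightarrow> complex) \<Rightarrow> nat \<Rightarrow> complex" where
  "tcoeff f n = (deriv ^^ n) f 0 / fact n"

definition H2 :: "(complex \<Rightarrow> complex) set" where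
  "H2 = {f. disc_fun f \<and> summable (\<lambda>n. (norm (tcoeff f n))^2)}"

definition h2_inner :: "(complex \<Rightarrow> complex) \<Rightarrow> (complex \<Rightarrow> complex) \<Rightarrow> complex" where
  "h2_inner f g = (\<Sum>n. tcoeff f n * cnj (tcoeff g n))"

definition h2_norm :: "(complex \<Rightarrow> complex) \<Rightarrow> real" where
  "h2_norm f = sqrt (\<Sum>n. (norm (tcoeff f n))^2)"

definition Mz :: "(complex \<Rightarrow> complex) \<Rightarrow> complex \<Rightarrow> complex" where
  "Mz f = (\<lambda>w. w * f w)"

definition zpow :: "nat \<Rightarrow> complex \<Rightarrow> complex" where
  "zpow m = onD (\<lambda>w. w ^ m)"

definition bounded_op_H2 :: "((complex \<Rightarrow> complex) \<Rightarrow> (complex \<Rightarrow> complex)) \<Rightarrow> bool" where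
  "bounded_op_H2 T \<longleftrightarrow>
     (\<forall>f\<in>H2. T f \<in> H2) \<and>
     (\<forall>f\<in>H2. \<forall>g\<in>H2. T (\<lambda>w. f w + g w) = (\<lambda>w. T f w + T g w)) \<and>
     (\<forall>f\<in>H2. \<forall>c. T (\<lambda>w. c * f w) = (\<lambda>w. c * T f w)) \<and>
     (\<exists>C. \<forall>f\<in>H2. h2_norm (T f) \<le> C * h2_norm f)"

definition left_invertible_H2 :: "((complex \<Rightarrow> complex) \<Rightarrow> (complex \<Rightarrow> complex)) \<Rightarrow> bool" where
  "left_invertible_H2 T \<longleftrightarrow> (\<exists>L. bounded_op_H2 L \<and> (\<forall>f\<in>H2. L (T f) = f))"

definition n_perturbation :: "nat \<Rightarrow> ((complex \<Rightarrow> complex) \<Rightarrow> (complex \<Rightarrow> complex)) \<Rightarrow> bool" where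
  "n_perturbation n F \<longleftrightarrow>
     bounded_op_H2 F \<and>
     (\<forall>m\<ge>n. F (zpow m) = (\<lambda>w. 0)) \<and>
     (\<forall>m. \<forall>f\<in>H2. \<exists>p :: complex poly.
         F (\<lambda>w. w ^ m * f w) = onD (\<lambda>w. w ^ (m + 1) * poly p w)) \<and>
     left_invertible_H2 (\<lambda>f. (\<lambda>w. Mz f w + F f w))"

section \<open>Analytic Hilbert spaces (scalar-valued, E = C)\<close>

definition analytic_hilbert_space ::
  "(complex \<Rightarrow> complex) set \<Rightarrow> ((complex \<Rightarrow> complex) \<Rightarrow> (complex \<Rightarrow> complex) \<Rightarrow> complex)
    \<Rightarrow> (complex \<Rightarrow> complex \<Rightarrow> complex) \<Rightarrow> bool" where
  "analytic_hilbert_space H ip k \<longleftrightarrow>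
     \<comment> \<open>a linear space of analytic functions on D\<close>
     (\<forall>f\<in>H. disc_fun f) \<and>
     (\<lambda>w. 0) \<in> H \<and>
     (\<forall>f\<in>H. \<forall>g\<in>H. (\<lambda>w. f w + g w) \<in> H) \<and>
     (\<forall>f\<in>H. \<forall>c. (\<lambda>w. c * f w) \<in> H) \<and>
     \<comment> \<open>complex inner product\<close>
     (\<forall>f\<in>H. \<forall>g\<in>H. \<forall>h\<in>H. ip (\<lambda>w. f w + g w) h = ip f h + ip g h) \<and>
     (\<forall>f\<in>H. \<forall>g\<in>H. \<forall>c. ip (\<lambda>w. c * f w) g = c * ip f g) \<and>
     (\<forall>f\<in>H. \<forall>g\<in>H. ip g f = cnj (ip f g)) \<and>
     (\<forall>f\<in>H. Im (ip f f) = 0 \<and> Re (ip f f) \<ge> 0) \<and>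
     (\<forall>f\<in>H. ip f f = 0 \<longrightarrow> f = (\<lambda>w. 0)) \<and>
     \<comment> \<open>completeness w.r.t. the induced norm\<close>
     (\<forall>X. (\<forall>i. X i \<in> H) \<and>
          (\<forall>e>0. \<exists>N. \<forall>i\<ge>N. \<forall>j\<ge>N. sqrt (Re (ip (\<lambda>w. X i w - X j w) (\<lambda>w. X i w - X j w))) < e)
        \<longrightarrow> (\<exists>L\<in>H. (\<lambda>i. sqrt (Re (ip (\<lambda>w. X i w - L w) (\<lambda>w. X i w - L w)))) \<longlonglongrightarrow> 0)) \<and>
     \<comment> \<open>k is a positive definite kernel, analytic in the first variable, reproducing for H\<close>
     (\<forall>w\<in>ball 0 1. (\<lambda>z. k z w) holomorphic_on ball 0 1) \<and>
     (\<forall>zs c. set zs \<subseteq> ball 0 1 \<longrightarrow>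
        (let S = (\<Sum>i<length zs. \<Sum>j<length zs. c i * cnj (c j) * k (zs ! j) (zs ! i))
         in Im S = 0 \<and> Re S \<ge> 0)) \<and>
     (\<forall>w\<in>ball 0 1. onD (\<lambda>z. k z w) \<in> H \<and>
        (\<forall>f\<in>H. ip f (onD (\<lambda>z. k z w)) = f w)) \<and>
     \<comment> \<open>M_z is a bounded operator on H\<close>
     (\<forall>f\<in>H. Mz f \<in> H) \<and>
     (\<exists>C. \<forall>f\<in>H. sqrt (Re (ip (Mz f) (Mz f))) \<le> C * sqrt (Re (ip f f)))"

definition unitarily_equiv_Mz ::
  "((complex \<Rightarrow> complex) \<Rightarrow> (complex \<Rightarrow> complex)) \<Rightarrow> (complex \<Rightarrow> complex) set
    \<Rightarrow> ((complex \<Rightarrow> complex) \<Rightarrow> (complex \<Rightarrow> complex) \<Rightarrow> complex) \<Rightarrow> bool" where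
  "unitarily_equiv_Mz T H ip \<longleftrightarrow>
     (\<exists>U. (\<forall>f\<in>H2. U f \<in> H) \<and>
          (\<forall>f\<in>H2. \<forall>g\<in>H2. U (\<lambda>w. f w + g w) = (\<lambda>w. U f w + U g w)) \<and>
          (\<forall>f\<in>H2. \<forall>c. U (\<lambda>w. c * f w) = (\<lambda>w. c * U f w)) \<and>
          U ` H2 = H \<and>
          (\<forall>f\<in>H2. \<forall>g\<in>H2. ip (U f) (U g) = h2_inner f g) \<and>
          (\<forall>f\<in>H2. U (T f) = Mz (U f)))"

end

theory Submission
  imports Defs
begin


definition psr :: "(nat \<Rightarrow> complex) \<Rightarrow> (complex \<Rightarrow> complex) \<Rightarrow> bool" where
  "psr a f \<longleftrightarrow> (\<forall>w\<in>ball 0 1. (\<lambda>n. a n * w ^ n) sums f w)"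

lemma psr_tcoeff:
  assumes "psr a f"
  shows "tcoeff f n = a n"
proof -
  define F where "F = Abs_fps a"
  have "(\<lambda>k. a k * (1/2::complex) ^ k) sums f (1/2)"
    using assms unfolding psr_def by auto
  hence "conv_radius a \<ge> norm (1/2::complex)"
    by (intro conv_radius_geI) (auto simp: sums_iff)
  hence rad: "fps_conv_radius F > 0"
    unfolding F_def fps_conv_radius_def
    by (auto simp: zero_ereal_def intro: less_le_trans[of _ "ereal (1/2)"])
  have "eventually (\<lambda>z. z \<in> ball (0::complex) 1) (nhds 0)"
    by (intro eventually_nhds_in_open) auto
  hence "eventually (\<lambda>z. eval_fps F z = f z) (nhds 0)"
    by eventually_elim (use assms in \<open>auto simp: psr_def eval_fps_def F_def sums_iff\<close>)
  hence "f has_fps_expansion F" using rad unfolding has_fps_expansion_def by auto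
  from fps_nth_fps_expansion[OF this, of n] show ?thesis
    by (simp add: tcoeff_def F_def)
qed

lemma psr_holo: "psr a f \<Longrightarrow> f holomorphic_on ball 0 1"
  unfolding psr_def by (rule power_series_holomorphic) auto

lemma H2_disc: "f \<in> H2 \<Longrightarrow> disc_fun f"
  by (simp add: H2_def)

lemma H2_out: "f \<in> H2 \<Longrightarrow> w \<notin> ball 0 1 \<Longrightarrow> f w = 0"
  by (simp add: H2_def disc_fun_def)

lemma H2_summable: "f \<in> H2 \<Longrightarrow> summable (\<lambda>n. (norm (tcoeff f n))^2)"
  by (simp add: H2_def)

lemma H2_psr: "f \<in> H2 \<Longrightarrow> psr (tcoeff f) f"
  unfolding psr_def tcoeff_def
proof
  fix w :: complex assume f: "f \<in> H2" and w: "w \<in> ball 0 1"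
  have "f holomorphic_on ball 0 1" using f by (simp add: H2_def disc_fun_def)
  from holomorphic_power_series[OF this w] show "(\<lambda>n. (deriv ^^ n) f 0 / fact n * w ^ n) sums f w"
    by simp
qed

lemma H2I:
  assumes "\<And>w. w \<notin> ball 0 1 \<Longrightarrow> f w = 0" "psr a f" "summable (\<lambda>n. (norm (a n))^2)"
  shows "f \<in> H2" "tcoeff f = a"
proof -
  show "tcoeff f = a" using psr_tcoeff[OF assms(2)] by auto
  then show "f \<in> H2" using assms psr_holo[OF assms(2)] by (auto simp: H2_def disc_fun_def)
qed

lemma H2_eqI:
  assumes "f \<in> H2" "g \<in> H2" "tcoeff f = tcoeff g"
  shows "f = g"
proof
  fix w
  show "f w = g w"
  proof (cases "w \<in> ball 0 1")
    case True
    then show ?thesis using H2_psr[OF assms(1)] H2_psr[OF assms(2)] assms(3)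
      unfolding psr_def by (metis sums_unique2)
  qed (use assms in \<open>auto simp: H2_out\<close>)
qed

lemma norm_mult_le_sq: "norm ((x::complex) * y) \<le> ((norm x)^2 + (norm y)^2) / 2"
proof -
  have "0 \<le> (norm x - norm y)^2" by simp
  then show ?thesis by (simp add: norm_mult power2_eq_square algebra_simps)
qed

lemma norm_add_sq_le: "(norm ((x::complex) + y))^2 \<le> 2 * (norm x)^2 + 2 * (norm y)^2"
proof -
  have "norm (x+y) \<le> norm x + norm y" by (rule norm_triangle_ineq)
  hence "(norm (x+y))^2 \<le> (norm x + norm y)^2" by (intro power_mono) auto
  also have "\<dots> \<le> 2 * (norm x)^2 + 2 * (norm y)^2"
    using norm_mult_le_sq[of x y] by (simp add: power2_eq_square algebra_simps norm_mult)
  finally show ?thesis .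
qed

lemma summable_sq_add:
  assumes "summable (\<lambda>n. (norm (a n))^2)" "summable (\<lambda>n. (norm (b n))^2)"
  shows "summable (\<lambda>n. (norm ((a n::complex) + b n))^2)"
  by (rule summable_comparison_test[OF _ summable_add[OF summable_mult[OF assms(1), of 2] summable_mult[OF assms(2), of 2]]])
     (auto intro!: exI[of _ 0] norm_add_sq_le)

lemma summable_prod_H2:
  assumes "summable (\<lambda>n. (norm (a n))^2)" "summable (\<lambda>n. (norm (b n))^2)"
  shows "summable (\<lambda>n. norm ((a n::complex) * b n))"
proof -
  have "\<And>n. norm (norm (a n * b n)) \<le> ((norm (a n))^2 + (norm (b n))^2) / 2"
    using norm_mult_le_sq by simp
  then show ?thesis
    by (intro summable_comparison_test[OF _ summable_divide[OF summable_add[OF assms]], of _ 2])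
       blast
qed

lemma H2_of_coeffs:
  assumes "summable (\<lambda>n. (norm (a n))^2)"
  shows "\<exists>f\<in>H2. tcoeff f = a"
proof -
  define f where "f = onD (\<lambda>w. \<Sum>n. a n * w ^ n)"
  have p: "psr a f" unfolding psr_def
  proof
    fix w :: complex assume w: "w \<in> ball 0 1"
    have eq: "(\<lambda>n. (norm (w ^ n))^2) = (\<lambda>n. (norm w ^ 2)^n)"
      by (simp add: norm_power power_mult[symmetric] mult.commute)
    have "norm w ^ 2 < 1" using w by (simp add: power_less_one_iff)
    hence "summable (\<lambda>n. (norm (w ^ n))^2)" unfolding eq
      by (intro summable_geometric) simp
    hence "summable (\<lambda>n. norm (a n * w ^ n))" by (rule summable_prod_H2[OF assms])
    hence "summable (\<lambda>n. a n * w ^ n)" by (rule summable_norm_cancel)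
    then show "(\<lambda>n. a n * w ^ n) sums f w" using w by (simp add: f_def onD_def summable_sums)
  qed
  have "f \<in> H2" "tcoeff f = a" by (rule H2I[OF _ p assms], simp add: f_def onD_def)+
  then show ?thesis by blast
qed



lemma H2_zero: "(\<lambda>w. 0) \<in> H2" "tcoeff (\<lambda>w. 0) = (\<lambda>n. 0)"
proof -
  have p: "psr (\<lambda>n. 0) (\<lambda>w. 0)" by (simp add: psr_def)
  show "(\<lambda>w. 0) \<in> H2" "tcoeff (\<lambda>w. 0) = (\<lambda>n. 0)" by (rule H2I[OF _ p]; simp)+
qed

lemma H2_add:
  assumes "f \<in> H2" "g \<in> H2"
  shows "(\<lambda>w. f w + g w) \<in> H2" "tcoeff (\<lambda>w. f w + g w) = (\<lambda>n. tcoeff f n + tcoeff g n)"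
proof -
  have p: "psr (\<lambda>n. tcoeff f n + tcoeff g n) (\<lambda>w. f w + g w)"
    using H2_psr[OF assms(1)] H2_psr[OF assms(2)] unfolding psr_def
    by (auto simp: distrib_right intro: sums_add)
  have s: "summable (\<lambda>n. (norm (tcoeff f n + tcoeff g n))^2)"
    by (intro summable_sq_add H2_summable assms)
  show "(\<lambda>w. f w + g w) \<in> H2" "tcoeff (\<lambda>w. f w + g w) = (\<lambda>n. tcoeff f n + tcoeff g n)"
    by (rule H2I[OF _ p s]; use assms in \<open>simp add: H2_out\<close>)+
qed

lemma H2_scale:
  assumes "f \<in> H2"
  shows "(\<lambda>w. c * f w) \<in> H2" "tcoeff (\<lambda>w. c * f w) = (\<lambda>n. c * tcoeff f n)"
proof -
  have p: "psr (\<lambda>n. c * tcoeff f n) (\<lambda>w. c * f w)"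
    using H2_psr[OF assms(1)] unfolding psr_def
    by (auto simp: mult.assoc intro: sums_mult)
  have s: "summable (\<lambda>n. (norm (c * tcoeff f n))^2)"
    using summable_mult[OF H2_summable[OF assms], of "(norm c)^2"]
    by (simp add: norm_mult power_mult_distrib)
  show "(\<lambda>w. c * f w) \<in> H2" "tcoeff (\<lambda>w. c * f w) = (\<lambda>n. c * tcoeff f n)"
    by (rule H2I[OF _ p s]; use assms in \<open>simp add: H2_out\<close>)+
qed

lemma H2_diff:
  assumes "f \<in> H2" "g \<in> H2"
  shows "(\<lambda>w. f w - g w) \<in> H2" "tcoeff (\<lambda>w. f w - g w) = (\<lambda>n. tcoeff f n - tcoeff g n)"
proof -
  have e: "(\<lambda>w. f w - g w) = (\<lambda>w. f w + (\<lambda>w. (-1) * g w) w)" by auto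
  note a = H2_add[OF assms(1) H2_scale(1)[OF assms(2), of "-1"]]
  show "(\<lambda>w. f w - g w) \<in> H2" unfolding e by (rule a(1))
  show "tcoeff (\<lambda>w. f w - g w) = (\<lambda>n. tcoeff f n - tcoeff g n)"
    unfolding e a(2) H2_scale(2)[OF assms(2)] by simp
qed

lemma H2_shift:
  assumes "f \<in> H2"
  shows "(\<lambda>w. w ^ m * f w) \<in> H2"
    "tcoeff (\<lambda>w. w ^ m * f w) = (\<lambda>k. if k < m then 0 else tcoeff f (k - m))"
proof -
  define b where "b = (\<lambda>k. if k < m then 0 else tcoeff f (k - m))"
  have p: "psr b (\<lambda>w. w ^ m * f w)" unfolding psr_def
  proof
    fix w :: complex assume w: "w \<in> ball 0 1"
    have "(\<lambda>n. w ^ m * (tcoeff f n * w ^ n)) sums (w ^ m * f w)"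
      using H2_psr[OF assms] w unfolding psr_def by (intro sums_mult) auto
    moreover have "(\<lambda>n. w ^ m * (tcoeff f n * w ^ n)) = (\<lambda>i. b (i + m) * w ^ (i + m))"
      by (auto simp: b_def power_add)
    ultimately have "(\<lambda>i. b (i + m) * w ^ (i + m)) sums (w ^ m * f w)" by simp
    then show "(\<lambda>n. b n * w ^ n) sums (w ^ m * f w)"
      using sums_zero_iff_shift[of m "\<lambda>n. b n * w ^ n"] by (simp add: b_def)
  qed
  have "summable (\<lambda>n. (norm (b (n + m)))^2)"
    using H2_summable[OF assms] by (simp add: b_def)
  hence s: "summable (\<lambda>n. (norm (b n))^2)"
    by (subst summable_iff_shift[of _ m, symmetric])
  show "(\<lambda>w. w ^ m * f w) \<in> H2" "tcoeff (\<lambda>w. w ^ m * f w) = (\<lambda>k. if k < m then 0 else tcoeff f (k - m))"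
    by (rule H2I[OF _ p s, unfolded b_def]; use assms in \<open>simp add: H2_out\<close>)+
qed

lemma H2_Mz: "f \<in> H2 \<Longrightarrow> Mz f \<in> H2"
  using H2_shift(1)[of f 1] by (simp add: Mz_def)

lemma tcoeff_Mz: "f \<in> H2 \<Longrightarrow> tcoeff (Mz f) = (\<lambda>k. if k < 1 then 0 else tcoeff f (k - 1))"
  using H2_shift(2)[of f 1] by (simp add: Mz_def)

lemma H2_poly: "onD (poly p) \<in> H2" "tcoeff (onD (poly p)) = coeff p"
proof -
  have p: "psr (coeff p) (onD (poly p))" unfolding psr_def
  proof
    fix w :: complex assume w: "w \<in> ball 0 1"
    have "(\<lambda>n. coeff p n * w ^ n) sums (\<Sum>n\<in>{..degree p}. coeff p n * w ^ n)"
      by (rule sums_finite) (auto simp: coeff_eq_0)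
    then show "(\<lambda>n. coeff p n * w ^ n) sums onD (poly p) w"
      using w by (simp add: onD_def poly_altdef)
  qed
  have s: "summable (\<lambda>n. (norm (coeff p n))^2)"
    by (rule summable_finite[of "{..degree p}"]) (auto simp: coeff_eq_0)
  show "onD (poly p) \<in> H2" "tcoeff (onD (poly p)) = coeff p"
    by (rule H2I[OF _ p s]; simp add: onD_def)+
qed

lemma zpow_poly: "zpow m = onD (poly (monom 1 m))"
  unfolding zpow_def by (rule arg_cong[where f=onD]) (auto simp: poly_monom)

lemma H2_zpow: "zpow m \<in> H2" "tcoeff (zpow m) = (\<lambda>k. if k = m then 1 else 0)"
  using H2_poly[of "monom 1 m"] by (auto simp: zpow_poly coeff_monom)

lemma H2_sum:
  assumes "finite A" "\<And>i. i \<in> A \<Longrightarrow> f i \<in> H2"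
  shows "(\<lambda>w. \<Sum>i\<in>A. c i * f i w) \<in> H2 \<and>
         tcoeff (\<lambda>w. \<Sum>i\<in>A. c i * f i w) = (\<lambda>k. \<Sum>i\<in>A. c i * tcoeff (f i) k)"
  using assms
proof (induction A rule: finite_induct)
  case empty
  then show ?case using H2_zero by simp
next
  case (insert x F)
  have e: "(\<lambda>w. \<Sum>i\<in>insert x F. c i * f i w) = (\<lambda>w. (\<lambda>w. c x * f x w) w + (\<lambda>w. \<Sum>i\<in>F. c i * f i w) w)"
    using insert by simp
  have fx: "f x \<in> H2" using insert by auto
  have IH: "(\<lambda>w. \<Sum>i\<in>F. c i * f i w) \<in> H2 \<and>
         tcoeff (\<lambda>w. \<Sum>i\<in>F. c i * f i w) = (\<lambda>k. \<Sum>i\<in>F. c i * tcoeff (f i) k)"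
    using insert by auto
  show ?case unfolding e using H2_add[OF H2_scale(1)[OF fx, of "c x"] conjunct1[OF IH]]
      H2_scale(2)[OF fx, of "c x"] IH insert
    by auto
qed



lemma summable_inner:
  assumes "f \<in> H2" "g \<in> H2"
  shows "summable (\<lambda>n. tcoeff f n * cnj (tcoeff g n))"
proof -
  have "summable (\<lambda>n. norm (tcoeff f n * cnj (tcoeff g n)))"
    by (rule summable_prod_H2) (use H2_summable[OF assms(1)] H2_summable[OF assms(2)] in auto)
  then show ?thesis by (rule summable_norm_cancel)
qed

lemma h2_inner_add_left:
  assumes "f \<in> H2" "g \<in> H2" "h \<in> H2"
  shows "h2_inner (\<lambda>w. f w + g w) h = h2_inner f h + h2_inner g h"
  unfolding h2_inner_def H2_add(2)[OF assms(1,2)] distrib_right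
  by (intro suminf_add[symmetric] summable_inner assms)

lemma h2_inner_scale_left:
  assumes "f \<in> H2" "g \<in> H2"
  shows "h2_inner (\<lambda>w. c * f w) g = c * h2_inner f g"
  unfolding h2_inner_def H2_scale(2)[OF assms(1)] mult.assoc
  by (intro suminf_mult summable_inner assms)

lemma h2_inner_cnj:
  assumes "f \<in> H2" "g \<in> H2"
  shows "h2_inner g f = cnj (h2_inner f g)"
proof -
  have "(\<lambda>n. tcoeff f n * cnj (tcoeff g n)) sums h2_inner f g"
    unfolding h2_inner_def by (intro summable_sums summable_inner assms)
  hence "(\<lambda>n. cnj (tcoeff f n * cnj (tcoeff g n))) sums cnj (h2_inner f g)"
    by (subst sums_cnj)
  hence "(\<lambda>n. tcoeff g n * cnj (tcoeff f n)) sums cnj (h2_inner f g)"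
    by (simp add: mult.commute)
  then show ?thesis unfolding h2_inner_def by (rule sums_unique[symmetric])
qed

lemma h2_inner_self:
  assumes "f \<in> H2"
  shows "h2_inner f f = complex_of_real (\<Sum>n. (norm (tcoeff f n))^2)"
  unfolding h2_inner_def complex_norm_square[symmetric]
  by (rule suminf_of_real[OF H2_summable[OF assms], symmetric])

lemma h2_norm_inner:
  assumes "f \<in> H2"
  shows "h2_norm f = sqrt (Re (h2_inner f f))"
  by (simp add: h2_inner_self[OF assms] h2_norm_def)

lemma h2_inner_self_eq0:
  assumes "f \<in> H2" "h2_inner f f = 0"
  shows "f = (\<lambda>w. 0)"
proof -
  have "(\<Sum>n. (norm (tcoeff f n))^2) = 0" using assms(2) h2_inner_self[OF assms(1)] by simp
  hence "\<forall>n. (norm (tcoeff f n))^2 = 0"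
    using suminf_eq_zero_iff[OF H2_summable[OF assms(1)]] by simp
  hence "tcoeff f = tcoeff (\<lambda>w. 0)" by (auto simp: H2_zero)
  then show ?thesis by (rule H2_eqI[OF assms(1) H2_zero(1)])
qed

lemma h2_norm_add_le:
  assumes "f \<in> H2" "g \<in> H2"
  shows "h2_norm (\<lambda>w. f w + g w) \<le> sqrt 2 * (h2_norm f + h2_norm g)"
proof -
  define A where "A = (\<Sum>n. (norm (tcoeff f n))^2)"
  define B where "B = (\<Sum>n. (norm (tcoeff g n))^2)"
  have sA: "summable (\<lambda>n. (norm (tcoeff f n))^2)" and sB: "summable (\<lambda>n. (norm (tcoeff g n))^2)"
    using assms by (auto intro: H2_summable)
  have A0: "A \<ge> 0" and B0: "B \<ge> 0" unfolding A_def B_def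
    by (intro suminf_nonneg sA sB; simp)+
  have "(\<Sum>n. (norm (tcoeff f n + tcoeff g n))^2) \<le> (\<Sum>n. 2 * (norm (tcoeff f n))^2 + 2 * (norm (tcoeff g n))^2)"
    by (intro suminf_le norm_add_sq_le summable_sq_add sA sB summable_add summable_mult)
  also have "\<dots> = 2 * A + 2 * B"
  proof -
    have "(\<Sum>n. 2 * (norm (tcoeff f n))^2 + 2 * (norm (tcoeff g n))^2) =
          (\<Sum>n. 2 * (norm (tcoeff f n))^2) + (\<Sum>n. 2 * (norm (tcoeff g n))^2)"
      by (intro suminf_add[symmetric] summable_mult sA sB)
    then show ?thesis by (simp add: A_def B_def suminf_mult[OF sA] suminf_mult[OF sB])
  qed
  finally have le: "(\<Sum>n. (norm (tcoeff f n + tcoeff g n))^2) \<le> 2 * (A + B)" by simp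
  have "h2_norm (\<lambda>w. f w + g w) = sqrt (\<Sum>n. (norm (tcoeff f n + tcoeff g n))^2)"
    by (simp add: h2_norm_def H2_add(2)[OF assms])
  also have "\<dots> \<le> sqrt (2 * (A + B))" using le by simp
  also have "\<dots> = sqrt 2 * sqrt (A + B)" by (simp add: real_sqrt_mult[symmetric])
  also have "\<dots> \<le> sqrt 2 * (sqrt A + sqrt B)"
    by (intro mult_left_mono sqrt_add_le_add_sqrt A0 B0) auto
  finally show ?thesis by (simp add: h2_norm_def A_def B_def)
qed

lemma h2_norm_Mz:
  assumes "f \<in> H2"
  shows "h2_norm (Mz f) = h2_norm f"
proof -
  define g where "g = (\<lambda>k. (norm (tcoeff (Mz f) k))^2)"
  have "(\<lambda>i. g (i + 1)) = (\<lambda>i. (norm (tcoeff f i))^2)"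
    by (simp add: g_def tcoeff_Mz[OF assms])
  hence "(\<lambda>i. g (i + 1)) sums (\<Sum>n. (norm (tcoeff f n))^2)"
    using summable_sums[OF H2_summable[OF assms]] by simp
  hence "g sums (\<Sum>n. (norm (tcoeff f n))^2)"
    by (subst (asm) sums_zero_iff_shift) (auto simp: g_def tcoeff_Mz[OF assms])
  then show ?thesis unfolding h2_norm_def by (simp add: g_def sums_iff)
qed

lemma l2_complete:
  fixes a :: "nat \<Rightarrow> nat \<Rightarrow> complex"
  assumes sa: "\<And>i. summable (\<lambda>k. (norm (a i k))^2)"
    and cau: "\<And>e. e > 0 \<Longrightarrow> \<exists>N. \<forall>i\<ge>N. \<forall>j\<ge>N. (\<Sum>k. (norm (a i k - a j k))^2) < e"
  shows "\<exists>b. summable (\<lambda>k. (norm (b k))^2) \<and>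
            (\<forall>e>0. \<exists>N. \<forall>i\<ge>N. summable (\<lambda>k. (norm (a i k - b k))^2) \<and> (\<Sum>k. (norm (a i k - b k))^2) \<le> e)"
proof -
  have sd: "summable (\<lambda>k. (norm (a i k - a j k))^2)" for i j
    using summable_sq_add[OF sa[of i], of "\<lambda>k. - a j k"] sa[of j] by simp
  have tm: "(norm (a i k - a j k))^2 \<le> (\<Sum>k. (norm (a i k - a j k))^2)" for i j k
    using sum_le_suminf[OF sd[of i j], of "{k}"] by simp
  have "Cauchy (\<lambda>i. a i k)" for k
  proof (rule CauchyI)
    fix e :: real assume e: "e > 0"
    obtain N where N: "\<forall>i\<ge>N. \<forall>j\<ge>N. (\<Sum>k. (norm (a i k - a j k))^2) < e^2"
      using cau[of "e^2"] e by auto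
    have "norm (a i k - a j k) < e" if "i \<ge> N" "j \<ge> N" for i j
    proof -
      have "(norm (a i k - a j k))^2 < e^2" using tm[of i k j] N that by fastforce
      then show ?thesis using e by (simp add: power_less_imp_less_base)
    qed
    then show "\<exists>M. \<forall>m\<ge>M. \<forall>n\<ge>M. norm (a m k - a n k) < e" by blast
  qed
  hence "convergent (\<lambda>i. a i k)" for k by (simp add: Cauchy_convergent_iff)
  then obtain b where b: "\<And>k. (\<lambda>i. a i k) \<longlonglongrightarrow> b k"
    unfolding convergent_def by metis
  have main: "\<exists>N. \<forall>i\<ge>N. summable (\<lambda>k. (norm (a i k - b k))^2) \<and> (\<Sum>k. (norm (a i k - b k))^2) \<le> e"
    if e: "e > 0" for e
  proof -
    obtain N where N: "\<forall>i\<ge>N. \<forall>j\<ge>N. (\<Sum>k. (norm (a i k - a j k))^2) < e"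
      using cau[OF e] by auto
    have partial: "(\<Sum>k<K. (norm (a i k - b k))^2) \<le> e" if i: "i \<ge> N" for i K
    proof -
      have "(\<lambda>j. \<Sum>k<K. (norm (a i k - a j k))^2) \<longlonglongrightarrow> (\<Sum>k<K. (norm (a i k - b k))^2)"
        by (intro tendsto_intros b)
      moreover have "\<forall>j\<ge>N. (\<Sum>k<K. (norm (a i k - a j k))^2) \<le> e"
      proof (intro allI impI)
        fix j assume j: "j \<ge> N"
        have "(\<Sum>k<K. (norm (a i k - a j k))^2) \<le> (\<Sum>k. (norm (a i k - a j k))^2)"
          by (intro sum_le_suminf sd) auto
        also have "\<dots> < e" using N i j by auto
        finally show "(\<Sum>k<K. (norm (a i k - a j k))^2) \<le> e" by simp
      qed
      ultimately show ?thesis by (intro LIMSEQ_le_const2) auto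
    qed
    have "summable (\<lambda>k. (norm (a i k - b k))^2) \<and> (\<Sum>k. (norm (a i k - b k))^2) \<le> e" if "i \<ge> N" for i
    proof
      show s: "summable (\<lambda>k. (norm (a i k - b k))^2)"
        by (rule summableI_nonneg_bounded[of _ e]) (use partial that in auto)
      show "(\<Sum>k. (norm (a i k - b k))^2) \<le> e"
        by (rule suminf_le_const[OF s]) (use partial that in auto)
    qed
    then show ?thesis by blast
  qed
  obtain N where N: "summable (\<lambda>k. (norm (a N k - b k))^2)"
    using main[of 1] by auto
  have "summable (\<lambda>k. (norm (a N k + - (a N k - b k)))^2)"
    by (rule summable_sq_add[OF sa]) (use N in \<open>simp add: norm_minus_commute\<close>)
  hence "summable (\<lambda>k. (norm (b k))^2)" by simp
  then show ?thesis using main by blast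
qed

lemma H2_complete:
  assumes Y: "\<And>i. Y i \<in> H2"
    and cau: "\<And>e. e > 0 \<Longrightarrow> \<exists>N. \<forall>i\<ge>N. \<forall>j\<ge>N. h2_norm (\<lambda>w. Y i w - Y j w) < e"
  shows "\<exists>L\<in>H2. (\<lambda>i. h2_norm (\<lambda>w. Y i w - L w)) \<longlonglongrightarrow> 0"
proof -
  define a where "a = (\<lambda>i k. tcoeff (Y i) k)"
  have hn: "h2_norm (\<lambda>w. Y i w - Y j w) = sqrt (\<Sum>k. (norm (a i k - a j k))^2)" for i j
    by (simp add: h2_norm_def H2_diff(2)[OF Y Y] a_def)
  have cau': "\<exists>N. \<forall>i\<ge>N. \<forall>j\<ge>N. (\<Sum>k. (norm (a i k - a j k))^2) < e" if e: "e > 0" for e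
  proof -
    obtain N where N: "\<forall>i\<ge>N. \<forall>j\<ge>N. h2_norm (\<lambda>w. Y i w - Y j w) < sqrt e"
      using cau[of "sqrt e"] e by auto
    have "(\<Sum>k. (norm (a i k - a j k))^2) < e" if "i \<ge> N" "j \<ge> N" for i j
      using N that unfolding hn by (simp add: real_sqrt_less_iff)
    then show ?thesis by blast
  qed
  obtain b where b: "summable (\<lambda>k. (norm (b k))^2)"
    and conv: "\<forall>e>0. \<exists>N. \<forall>i\<ge>N. summable (\<lambda>k. (norm (a i k - b k))^2) \<and> (\<Sum>k. (norm (a i k - b k))^2) \<le> e"
    using l2_complete[of a, OF _ cau'] H2_summable[OF Y] unfolding a_def by blast
  obtain L where L: "L \<in> H2" "tcoeff L = b" using H2_of_coeffs[OF b] by blast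
  have "(\<lambda>i. h2_norm (\<lambda>w. Y i w - L w)) \<longlonglongrightarrow> 0"
  proof (rule LIMSEQ_I)
    fix r :: real assume r: "r > 0"
    obtain N where N: "\<forall>i\<ge>N. summable (\<lambda>k. (norm (a i k - b k))^2) \<and> (\<Sum>k. (norm (a i k - b k))^2) \<le> (r/2)^2"
      using conv r by (metis zero_less_power half_gt_zero)
    have "norm (h2_norm (\<lambda>w. Y i w - L w) - 0) < r" if "i \<ge> N" for i
    proof -
      have "h2_norm (\<lambda>w. Y i w - L w) = sqrt (\<Sum>k. (norm (a i k - b k))^2)"
        by (simp add: h2_norm_def H2_diff(2)[OF Y L(1)] a_def L(2))
      also have "\<dots> \<le> sqrt ((r/2)^2)" using N that by (intro real_sqrt_le_mono) auto
      also have "\<dots> < r" using r by (simp add: real_sqrt_abs)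
      finally have lt: "h2_norm (\<lambda>w. Y i w - L w) < r" .
      have "0 \<le> (\<Sum>k. (norm (a i k - b k))^2)" using N that by (intro suminf_nonneg) auto
      hence "h2_norm (\<lambda>w. Y i w - L w) \<ge> 0"
        by (simp add: h2_norm_def H2_diff(2)[OF Y L(1)] a_def L(2))
      with lt show ?thesis by simp
    qed
    then show "\<exists>no. \<forall>n\<ge>no. norm (h2_norm (\<lambda>w. Y n w - L w) - 0) < r" by blast
  qed
  then show ?thesis using L by blast
qed



definition lin :: "((complex \<Rightarrow> complex) \<Rightarrow> (complex \<Rightarrow> complex)) \<Rightarrow> bool" where
  "lin T \<longleftrightarrow> (\<forall>f\<in>H2. T f \<in> H2) \<and>
     (\<forall>f\<in>H2. \<forall>g\<in>H2. T (\<lambda>w. f w + g w) = (\<lambda>w. T f w + T g w)) \<and>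
     (\<forall>f\<in>H2. \<forall>c. T (\<lambda>w. c * f w) = (\<lambda>w. c * T f w))"

lemma linD:
  assumes "lin T"
  shows "\<And>f. f \<in> H2 \<Longrightarrow> T f \<in> H2"
    "\<And>f g. f \<in> H2 \<Longrightarrow> g \<in> H2 \<Longrightarrow> T (\<lambda>w. f w + g w) = (\<lambda>w. T f w + T g w)"
    "\<And>f c. f \<in> H2 \<Longrightarrow> T (\<lambda>w. c * f w) = (\<lambda>w. c * T f w)"
  using assms unfolding lin_def by blast+

lemma lin_zero:
  assumes "lin T" shows "T (\<lambda>w. 0) = (\<lambda>w. 0)"
proof -
  have "T (\<lambda>w. 0 * (\<lambda>w. 0) w) = (\<lambda>w. 0 * T (\<lambda>w. 0) w)"
    by (rule linD(3)[OF assms H2_zero(1)])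
  then show ?thesis by simp
qed

lemma lin_diff:
  assumes "lin T" "f \<in> H2" "g \<in> H2"
  shows "T (\<lambda>w. f w - g w) = (\<lambda>w. T f w - T g w)"
proof -
  have e: "(\<lambda>w. f w - g w) = (\<lambda>w. f w + (\<lambda>w. (-1) * g w) w)" by auto
  show ?thesis unfolding e
    using linD(2)[OF assms(1,2) H2_scale(1)[OF assms(3), of "-1"]] linD(3)[OF assms(1,3), of "-1"]
    by simp
qed

lemma lin_sum:
  assumes "lin T" "finite A" "\<And>i. i \<in> A \<Longrightarrow> f i \<in> H2"
  shows "T (\<lambda>w. \<Sum>i\<in>A. c i * f i w) = (\<lambda>w. \<Sum>i\<in>A. c i * T (f i) w)"
  using assms(2,3)
proof (induction A rule: finite_induct)
  case empty
  then show ?case using lin_zero[OF assms(1)] by simp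
next
  case (insert x A)
  have e: "(\<lambda>w. \<Sum>i\<in>insert x A. c i * f i w) = (\<lambda>w. (\<lambda>w. c x * f x w) w + (\<lambda>w. \<Sum>i\<in>A. c i * f i w) w)"
    using insert by simp
  have fx: "f x \<in> H2" using insert by auto
  have s: "(\<lambda>w. \<Sum>i\<in>A. c i * f i w) \<in> H2" using H2_sum[of A f c] insert by auto
  show ?case unfolding e linD(2)[OF assms(1) H2_scale(1)[OF fx] s] linD(3)[OF assms(1) fx]
    using insert by auto
qed

lemma lin_comp: "lin T1 \<Longrightarrow> lin T2 \<Longrightarrow> lin (T1 \<circ> T2)"
  unfolding lin_def by (auto simp: o_def)

lemma lin_id: "lin (\<lambda>f. f)"
  unfolding lin_def by auto

lemma lin_funpow: "lin T \<Longrightarrow> lin (T ^^ k)"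
proof (induction k)
  case 0
  then show ?case using lin_id by (simp add: id_def)
next
  case (Suc k)
  then show ?case using lin_comp[of T "T ^^ k"] by (simp only: funpow.simps)
qed

lemma bounded_lin: "bounded_op_H2 T \<Longrightarrow> lin T"
  unfolding bounded_op_H2_def lin_def by blast

lemma H2_decomp:
  assumes g: "g \<in> H2"
  shows "\<exists>h\<in>H2. g = (\<lambda>w. (\<Sum>j<N. tcoeff g j * zpow j w) + w ^ N * h w)"
proof -
  define a where "a = tcoeff g"
  have "summable (\<lambda>k. (norm (a (k + N)))^2)"
    using H2_summable[OF g] unfolding a_def by (rule summable_iff_shift[THEN iffD2])
  then obtain h where h: "h \<in> H2" "tcoeff h = (\<lambda>k. a (k + N))"
    using H2_of_coeffs[of "\<lambda>k. a (k + N)"] by blast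
  have "g w = (\<Sum>j<N. tcoeff g j * zpow j w) + w ^ N * h w" for w
  proof (cases "w \<in> ball 0 1")
    case True
    have "(\<lambda>k. a (k + N) * w ^ k) sums h w" using H2_psr[OF h(1)] True h(2) by (auto simp: psr_def)
    hence "(\<lambda>k. w ^ N * (a (k + N) * w ^ k)) sums (w ^ N * h w)" by (rule sums_mult)
    hence "(\<lambda>k. (\<lambda>n. a n * w ^ n) (k + N)) sums (w ^ N * h w)"
      by (simp add: power_add mult_ac)
    hence "(\<lambda>n. a n * w ^ n) sums (w ^ N * h w + (\<Sum>j<N. a j * w ^ j))"
      by (subst (asm) sums_iff_shift)
    moreover have "(\<lambda>n. a n * w ^ n) sums g w" using H2_psr[OF g] True by (auto simp: psr_def a_def)
    ultimately have "g w = w ^ N * h w + (\<Sum>j<N. a j * w ^ j)" by (metis sums_unique2)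
    then show ?thesis using True by (simp add: zpow_def onD_def a_def)
  next
    case False
    then show ?thesis using g h by (simp add: H2_out zpow_def onD_def)
  qed
  then show ?thesis using h by blast
qed

lemma onD_mult_pow: "onD (\<lambda>w. w ^ m * p w) = (\<lambda>w. w ^ m * onD p w)"
  by (auto simp: onD_def)

lemma zpow_mult: "(\<lambda>w. w ^ m * zpow j w) = zpow (m + j)"
  by (auto simp: zpow_def onD_def power_add)

locale pert =
  fixes n :: nat and F :: "(complex \<Rightarrow> complex) \<Rightarrow> (complex \<Rightarrow> complex)"
  assumes n1: "n \<ge> 1" and np: "n_perturbation n F"
begin

definition S where "S = (\<lambda>f. (\<lambda>w. Mz f w + F f w))"

lemma F_bounded: "bounded_op_H2 F" using np by (simp add: n_perturbation_def)
lemma F_lin: "lin F" using bounded_lin[OF F_bounded] .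
lemma F_zpow: "m \<ge> n \<Longrightarrow> F (zpow m) = (\<lambda>w. 0)" using np by (simp add: n_perturbation_def)
lemma F_b: "f \<in> H2 \<Longrightarrow> \<exists>p :: complex poly. F (\<lambda>w. w ^ m * f w) = onD (\<lambda>w. w ^ (m + 1) * poly p w)"
  using np by (simp add: n_perturbation_def)
lemma S_leftinv: "\<exists>L. bounded_op_H2 L \<and> (\<forall>f\<in>H2. L (S f) = f)"
  using np by (simp add: n_perturbation_def left_invertible_H2_def S_def)

lemma part_i:
  assumes m: "m \<ge> n" and f: "f \<in> H2"
  shows "F (\<lambda>w. w ^ m * f w) = (\<lambda>w. 0)"
proof -
  have fm: "(\<lambda>w. w ^ m * f w) \<in> H2" by (rule H2_shift(1)[OF f])
  have G: "F (\<lambda>w. w ^ m * f w) \<in> H2" by (rule linD(1)[OF F_lin fm])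
  have "tcoeff (F (\<lambda>w. w ^ m * f w)) k = 0" for k
  proof -
    obtain h where h: "h \<in> H2" "f = (\<lambda>w. (\<Sum>j<k. tcoeff f j * zpow j w) + w ^ k * h w)"
      using H2_decomp[OF f, of k] by blast
    have e: "(\<lambda>w. w ^ m * f w) = (\<lambda>w. (\<lambda>w. \<Sum>j<k. tcoeff f j * zpow (m + j) w) w + (\<lambda>w. w ^ (m + k) * h w) w)"
    proof (rule ext)
      fix w
      have fw: "f w = (\<Sum>j<k. tcoeff f j * zpow j w) + w ^ k * h w" using h(2) by metis
      show "w ^ m * f w = (\<lambda>w. \<Sum>j<k. tcoeff f j * zpow (m + j) w) w + (\<lambda>w. w ^ (m + k) * h w) w"
        by (subst fw, cases "w \<in> ball 0 1") (simp_all add: zpow_def onD_def distrib_left sum_distrib_left power_add mult_ac)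
    qed
    have s1: "(\<lambda>w. \<Sum>j<k. tcoeff f j * zpow (m + j) w) \<in> H2"
      using H2_sum[of "{..<k}" "\<lambda>j. zpow (m + j)"] H2_zpow by auto
    have s2: "(\<lambda>w. w ^ (m + k) * h w) \<in> H2" by (rule H2_shift(1)[OF h(1)])
    have "F (\<lambda>w. \<Sum>j<k. tcoeff f j * zpow (m + j) w) = (\<lambda>w. \<Sum>j<k. tcoeff f j * F (zpow (m + j)) w)"
      by (rule lin_sum[OF F_lin]) (auto simp: H2_zpow)
    also have "\<dots> = (\<lambda>w. 0)" using F_zpow m by simp
    finally have z: "F (\<lambda>w. \<Sum>j<k. tcoeff f j * zpow (m + j) w) = (\<lambda>w. 0)" .
    obtain p where p: "F (\<lambda>w. w ^ (m + k) * h w) = onD (\<lambda>w. w ^ (m + k + 1) * poly p w)"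
      using F_b[OF h(1)] by blast
    have "F (\<lambda>w. w ^ m * f w) = (\<lambda>w. w ^ (m + k + 1) * onD (poly p) w)"
      unfolding e linD(2)[OF F_lin s1 s2] z p onD_mult_pow by simp
    then show ?thesis using H2_shift(2)[OF H2_poly(1), of "m + k + 1" p] by simp
  qed
  hence "tcoeff (F (\<lambda>w. w ^ m * f w)) = tcoeff (\<lambda>w. 0)" by (auto simp: H2_zero)
  then show ?thesis by (rule H2_eqI[OF G H2_zero(1)])
qed

lemma S_H2: "f \<in> H2 \<Longrightarrow> S f \<in> H2"
  unfolding S_def by (intro H2_add(1) H2_Mz linD(1)[OF F_lin])

lemma S_lin: "lin S"
  unfolding lin_def
proof (intro conjI ballI allI)
  fix f g assume f: "f \<in> H2" and g: "g \<in> H2"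
  show "S (\<lambda>w. f w + g w) = (\<lambda>w. S f w + S g w)"
    unfolding S_def linD(2)[OF F_lin f g] by (auto simp: Mz_def algebra_simps)
next
  fix f c assume f: "f \<in> H2"
  show "S (\<lambda>w. c * f w) = (\<lambda>w. c * S f w)"
    unfolding S_def linD(3)[OF F_lin f] by (auto simp: Mz_def algebra_simps)
qed (rule S_H2)

lemma Sk_lin: "lin (S ^^ k)" by (rule lin_funpow[OF S_lin])

lemma Sk_H2: "f \<in> H2 \<Longrightarrow> (S ^^ k) f \<in> H2" by (rule linD(1)[OF Sk_lin])

lemma part_ii:
  assumes f: "f \<in> H2"
  shows "\<exists>p :: complex poly. (S ^^ m) f = (\<lambda>w. w ^ m * (f w + onD (poly p) w))"
proof (induction m)
  case 0
  have "onD (poly 0) = (\<lambda>w. 0)" by (auto simp: onD_def)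
  then show ?case by (intro exI[of _ 0]) (simp add: onD_def)
next
  case (Suc m)
  then obtain p where p: "(S ^^ m) f = (\<lambda>w. w ^ m * (f w + onD (poly p) w))" by blast
  define g where "g = (\<lambda>w. f w + onD (poly p) w)"
  have g: "g \<in> H2" unfolding g_def by (intro H2_add(1) f H2_poly(1))
  obtain q where q: "F (\<lambda>w. w ^ m * g w) = onD (\<lambda>w. w ^ (m + 1) * poly q w)"
    using F_b[OF g] by blast
  have "(S ^^ Suc m) f = S (\<lambda>w. w ^ m * g w)" using p by (simp add: g_def)
  also have "\<dots> = (\<lambda>w. w ^ Suc m * (f w + onD (poly (p + q)) w))"
    unfolding S_def q by (auto simp: Mz_def onD_def g_def algebra_simps)
  finally show ?case by blast
qed

lemma S_inj: "f \<in> H2 \<Longrightarrow> g \<in> H2 \<Longrightarrow> S f = S g \<Longrightarrow> f = g"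
  using S_leftinv by metis

lemma Sk_inj: "f \<in> H2 \<Longrightarrow> g \<in> H2 \<Longrightarrow> (S ^^ k) f = (S ^^ k) g \<Longrightarrow> f = g"
proof (induction k arbitrary: f g)
  case (Suc k)
  then show ?case using S_inj[of "(S ^^ k) f" "(S ^^ k) g"] Sk_H2[of f k] Sk_H2[of g k] by auto
qed simp

lemma S_shift: "m \<ge> n \<Longrightarrow> h \<in> H2 \<Longrightarrow> S (\<lambda>w. w ^ m * h w) = (\<lambda>w. w ^ (m + 1) * h w)"
  unfolding S_def part_i by (auto simp: Mz_def)

end



lemma shift_cancel:
  assumes "g1 \<in> H2" "g2 \<in> H2" "(\<lambda>w. w ^ m * g1 w) = (\<lambda>w. w ^ m * g2 w)"
  shows "g1 = g2"
proof (rule H2_eqI[OF assms(1,2)], rule ext)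
  fix k
  have "tcoeff (\<lambda>w. w ^ m * g1 w) (k + m) = tcoeff (\<lambda>w. w ^ m * g2 w) (k + m)" using assms(3) by simp
  then show "tcoeff g1 k = tcoeff g2 k"
    unfolding H2_shift(2)[OF assms(1)] H2_shift(2)[OF assms(2)] by simp
qed

context pert
begin

definition U where
  "U f = (\<lambda>w. f w + onD (poly (SOME p. (S ^^ n) f = (\<lambda>w. w ^ n * (f w + onD (poly p) w)))) w)"

lemma U_H2_eq:
  assumes f: "f \<in> H2"
  shows "U f \<in> H2" "(S ^^ n) f = (\<lambda>w. w ^ n * U f w)"
proof -
  define p where "p = (SOME p. (S ^^ n) f = (\<lambda>w. w ^ n * (f w + onD (poly p) w)))"
  have "(S ^^ n) f = (\<lambda>w. w ^ n * (f w + onD (poly p) w))"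
    unfolding p_def by (rule someI_ex[OF part_ii[OF f]])
  moreover have "U f = (\<lambda>w. f w + onD (poly p) w)" by (simp add: U_def p_def)
  ultimately show "U f \<in> H2" "(S ^^ n) f = (\<lambda>w. w ^ n * U f w)"
    using H2_add(1)[OF f H2_poly(1)] by auto
qed

lemma U_H2: "f \<in> H2 \<Longrightarrow> U f \<in> H2" by (rule U_H2_eq(1))

lemma U_unique:
  assumes f: "f \<in> H2" and g: "g \<in> H2" and e: "(S ^^ n) f = (\<lambda>w. w ^ n * g w)"
  shows "U f = g"
  by (rule shift_cancel[OF U_H2[OF f] g, of n]) (use U_H2_eq(2)[OF f] e in simp)

lemma U_lin: "lin U"
  unfolding lin_def
proof (intro conjI ballI allI)
  fix f g assume f: "f \<in> H2" and g: "g \<in> H2"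
  show "U (\<lambda>w. f w + g w) = (\<lambda>w. U f w + U g w)"
  proof (rule U_unique[OF H2_add(1)[OF f g] H2_add(1)[OF U_H2[OF f] U_H2[OF g]]])
    show "(S ^^ n) (\<lambda>w. f w + g w) = (\<lambda>w. w ^ n * (U f w + U g w))"
      unfolding linD(2)[OF Sk_lin f g] U_H2_eq(2)[OF f] U_H2_eq(2)[OF g] by (simp add: distrib_left)
  qed
next
  fix f c assume f: "f \<in> H2"
  show "U (\<lambda>w. c * f w) = (\<lambda>w. c * U f w)"
  proof (rule U_unique[OF H2_scale(1)[OF f] H2_scale(1)[OF U_H2[OF f]]])
    show "(S ^^ n) (\<lambda>w. c * f w) = (\<lambda>w. w ^ n * (c * U f w))"
      unfolding linD(3)[OF Sk_lin f] U_H2_eq(2)[OF f] by (simp add: mult_ac)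
  qed
qed (rule U_H2)

lemma U_S:
  assumes f: "f \<in> H2"
  shows "U (S f) = Mz (U f)"
proof (rule U_unique[OF S_H2[OF f] H2_Mz[OF U_H2[OF f]]])
  have "(S ^^ n) (S f) = S ((S ^^ n) f)"
    by (metis comp_apply funpow.simps(2) funpow_Suc_right)
  also have "\<dots> = S (\<lambda>w. w ^ n * U f w)" by (simp add: U_H2_eq(2)[OF f])
  also have "\<dots> = (\<lambda>w. w ^ (n + 1) * U f w)" by (rule S_shift[OF order_refl U_H2[OF f]])
  finally show "(S ^^ n) (S f) = (\<lambda>w. w ^ n * Mz (U f) w)" by (simp add: Mz_def mult_ac)
qed

lemma Sk_shift:
  assumes h: "h \<in> H2"
  shows "(S ^^ k) (\<lambda>w. w ^ n * h w) = (\<lambda>w. w ^ (n + k) * h w)"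
proof (induction k)
  case (Suc k)
  then show ?case using S_shift[of "n + k" h] h by simp
qed simp

lemma U_shift:
  assumes h: "h \<in> H2"
  shows "U (\<lambda>w. w ^ n * h w) = (\<lambda>w. w ^ n * h w)"
  by (rule U_unique[OF H2_shift(1)[OF h] H2_shift(1)[OF h]])
     (simp only: Sk_shift[OF h] power_add mult.assoc)

lemma U_inj:
  assumes "f \<in> H2" "g \<in> H2" "U f = U g"
  shows "f = g"
  by (rule Sk_inj[OF assms(1,2), of n]) (simp add: U_H2_eq(2)[OF assms(1)] U_H2_eq(2)[OF assms(2)] assms(3))

lemma U_formula:
  assumes g: "g \<in> H2"
  shows "U g = (\<lambda>w. g w + (\<Sum>j<n. tcoeff g j * (U (zpow j) w - zpow j w)))"
proof -
  obtain h where h: "h \<in> H2" "g = (\<lambda>w. (\<Sum>j<n. tcoeff g j * zpow j w) + w ^ n * h w)"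
    using H2_decomp[OF g, of n] by blast
  have s1: "(\<lambda>w. \<Sum>j<n. tcoeff g j * zpow j w) \<in> H2"
    using H2_sum[of "{..<n}" zpow] H2_zpow by auto
  have s2: "(\<lambda>w. w ^ n * h w) \<in> H2" by (rule H2_shift(1)[OF h(1)])
  have "U g = U (\<lambda>w. (\<lambda>w. \<Sum>j<n. tcoeff g j * zpow j w) w + (\<lambda>w. w ^ n * h w) w)"
    using h(2) by simp
  also have "\<dots> = (\<lambda>w. (\<Sum>j<n. tcoeff g j * U (zpow j) w) + w ^ n * h w)"
    unfolding linD(2)[OF U_lin s1 s2] lin_sum[OF U_lin finite_lessThan H2_zpow(1)] U_shift[OF h(1)] ..
  also have "\<dots> = (\<lambda>w. g w + (\<Sum>j<n. tcoeff g j * (U (zpow j) w - zpow j w)))"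
  proof (rule ext)
    fix w
    have gw: "g w = (\<Sum>j<n. tcoeff g j * zpow j w) + w ^ n * h w" using h(2) by metis
    show "(\<Sum>j<n. tcoeff g j * U (zpow j) w) + w ^ n * h w = g w + (\<Sum>j<n. tcoeff g j * (U (zpow j) w - zpow j w))"
      unfolding gw by (simp add: right_diff_distrib sum_subtractf)
  qed
  finally show ?thesis .
qed

definition dd where "dd j w = U (zpow j) w - zpow j w"
definition ec where "ec w = (\<lambda>k. cnj w ^ k + (if k < n then cnj (dd k w) else 0))"
definition e where "e w = (SOME f. f \<in> H2 \<and> tcoeff f = ec w)"

lemma ec_summable:
  assumes w: "w \<in> ball 0 1"
  shows "summable (\<lambda>k. (norm (ec w k))^2)"
  unfolding ec_def
proof (rule summable_sq_add)
  have eq: "(\<lambda>k. (norm (cnj w ^ k))^2) = (\<lambda>k. (norm w ^ 2) ^ k)"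
    by (simp add: norm_power power_mult[symmetric] mult.commute)
  have "norm w ^ 2 < 1" using w by (simp add: power_less_one_iff)
  then show "summable (\<lambda>k. (norm (cnj w ^ k))^2)" unfolding eq by (intro summable_geometric) simp
  show "summable (\<lambda>k. (norm (if k < n then cnj (dd k w) else 0))^2)"
    by (rule summable_finite[of "{..<n}"]) auto
qed

lemma e_H2:
  assumes w: "w \<in> ball 0 1"
  shows "e w \<in> H2" "tcoeff (e w) = ec w"
proof -
  have "\<exists>f. f \<in> H2 \<and> tcoeff f = ec w" using H2_of_coeffs[OF ec_summable[OF w]] by blast
  from someI_ex[OF this] show "e w \<in> H2" "tcoeff (e w) = ec w" unfolding e_def by auto
qed

lemma eval_U:
  assumes g: "g \<in> H2" and w: "w \<in> ball 0 1"
  shows "h2_inner g (e w) = U g w"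
proof -
  have t: "(\<lambda>k. tcoeff g k * cnj (tcoeff (e w) k)) =
        (\<lambda>k. tcoeff g k * w ^ k + (if k < n then tcoeff g k * dd k w else 0))"
    by (auto simp: e_H2(2)[OF w] ec_def distrib_left)
  have s1: "(\<lambda>k. tcoeff g k * w ^ k) sums g w" using H2_psr[OF g] w by (auto simp: psr_def)
  have s2: "(\<lambda>k. if k < n then tcoeff g k * dd k w else 0) sums (\<Sum>k\<in>{..<n}. if k < n then tcoeff g k * dd k w else 0)"
    by (rule sums_finite) auto
  have "(\<lambda>k. tcoeff g k * cnj (tcoeff (e w) k)) sums (g w + (\<Sum>k<n. tcoeff g k * dd k w))"
    unfolding t using sums_add[OF s1 s2] by simp
  hence "h2_inner g (e w) = g w + (\<Sum>k<n. tcoeff g k * dd k w)"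
    unfolding h2_inner_def by (rule sums_unique[symmetric])
  also have "\<dots> = U g w" by (simp add: U_formula[OF g] dd_def)
  finally show ?thesis .
qed

end



lemma h2_inner_zero_left: "g \<in> H2 \<Longrightarrow> h2_inner (\<lambda>w. 0) g = 0"
  by (simp add: h2_inner_def H2_zero(2))

lemma h2_inner_sum_left:
  assumes "finite A" "\<And>i. i \<in> A \<Longrightarrow> f i \<in> H2" "g \<in> H2"
  shows "h2_inner (\<lambda>w. \<Sum>i\<in>A. c i * f i w) g = (\<Sum>i\<in>A. c i * h2_inner (f i) g)"
  using assms(1,2)
proof (induction A rule: finite_induct)
  case empty
  then show ?case using h2_inner_zero_left[OF assms(3)] by simp
next
  case (insert x A)
  have e: "(\<lambda>w. \<Sum>i\<in>insert x A. c i * f i w) = (\<lambda>w. (\<lambda>w. c x * f x w) w + (\<lambda>w. \<Sum>i\<in>A. c i * f i w) w)"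
    using insert by simp
  have fx: "f x \<in> H2" using insert by auto
  have s: "(\<lambda>w. \<Sum>i\<in>A. c i * f i w) \<in> H2" using H2_sum[of A f c] insert by auto
  show ?case unfolding e h2_inner_add_left[OF H2_scale(1)[OF fx] s assms(3)]
      h2_inner_scale_left[OF fx assms(3)] using insert by auto
qed

lemma h2_inner_sum_right:
  assumes "finite A" "\<And>i. i \<in> A \<Longrightarrow> f i \<in> H2" "g \<in> H2"
  shows "h2_inner g (\<lambda>w. \<Sum>i\<in>A. c i * f i w) = (\<Sum>i\<in>A. cnj (c i) * h2_inner g (f i))"
proof -
  have s: "(\<lambda>w. \<Sum>i\<in>A. c i * f i w) \<in> H2" using H2_sum[of A f c] assms by auto
  have "h2_inner g (\<lambda>w. \<Sum>i\<in>A. c i * f i w) = cnj (h2_inner (\<lambda>w. \<Sum>i\<in>A. c i * f i w) g)"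
    by (rule h2_inner_cnj[OF s assms(3)])
  also have "\<dots> = (\<Sum>i\<in>A. cnj (c i) * cnj (h2_inner (f i) g))"
    using h2_inner_sum_left[OF assms, where c=c] by simp
  also have "\<dots> = (\<Sum>i\<in>A. cnj (c i) * h2_inner g (f i))"
    by (intro sum.cong refl) (simp add: h2_inner_cnj[OF assms(3)] assms(2))
  finally show ?thesis .
qed

lemma h2_inner_self_pos:
  assumes "f \<in> H2"
  shows "Im (h2_inner f f) = 0 \<and> Re (h2_inner f f) \<ge> 0"
  unfolding h2_inner_self[OF assms] by (auto intro!: suminf_nonneg H2_summable assms)

context pert
begin

lemma U_inj_on: "inj_on U H2"
  by (auto intro: inj_onI U_inj)

lemma S_bounded: "\<exists>C. \<forall>f\<in>H2. h2_norm (S f) \<le> C * h2_norm f"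
proof -
  obtain C where C: "\<forall>f\<in>H2. h2_norm (F f) \<le> C * h2_norm f"
    using F_bounded unfolding bounded_op_H2_def by blast
  have "h2_norm (S f) \<le> (sqrt 2 * (1 + C)) * h2_norm f" if f: "f \<in> H2" for f
  proof -
    have "h2_norm (S f) \<le> sqrt 2 * (h2_norm (Mz f) + h2_norm (F f))"
      unfolding S_def by (intro h2_norm_add_le H2_Mz f linD(1)[OF F_lin])
    also have "\<dots> \<le> sqrt 2 * (h2_norm f + C * h2_norm f)"
      using C f by (intro mult_left_mono) (auto simp: h2_norm_Mz)
    finally show ?thesis by (simp add: algebra_simps)
  qed
  then show ?thesis by blast
qed

lemma part_iii: "\<exists>H ip k. analytic_hilbert_space H ip k \<and> unitarily_equiv_Mz S H ip"
proof -
  define H where "H = U ` H2"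
  define ip where "ip = (\<lambda>a b. h2_inner (inv_into H2 U a) (inv_into H2 U b))"
  define k where "k = (\<lambda>z w. U (e w) z)"
  have invU: "inv_into H2 U (U f) = f" if "f \<in> H2" for f
    by (rule inv_into_f_f[OF U_inj_on that])
  have ipU: "ip (U f) (U g) = h2_inner f g" if "f \<in> H2" "g \<in> H2" for f g
    using that by (simp add: ip_def invU)
  have Uadd: "(\<lambda>w. U f w + U g w) = U (\<lambda>w. f w + g w)" if "f \<in> H2" "g \<in> H2" for f g
    using linD(2)[OF U_lin that] by simp
  have Uscale: "(\<lambda>w. c * U f w) = U (\<lambda>w. c * f w)" if "f \<in> H2" for f c
    using linD(3)[OF U_lin that] by simp
  have Udiff: "(\<lambda>w. U f w - U g w) = U (\<lambda>w. f w - g w)" if "f \<in> H2" "g \<in> H2" for f g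
    using lin_diff[OF U_lin that] by simp
  have U0: "U (\<lambda>w. 0) = (\<lambda>w. 0)" by (rule lin_zero[OF U_lin])
  have normU: "sqrt (Re (ip (U f) (U f))) = h2_norm f" if "f \<in> H2" for f
    using that by (simp add: ipU h2_norm_inner)
  have Uout: "onD (U f) = U f" if "f \<in> H2" for f
    using H2_out[OF U_H2[OF that]] by (auto simp: onD_def)
  have ahs: "analytic_hilbert_space H ip k"
    unfolding analytic_hilbert_space_def
  proof (intro conjI ballI allI impI)
    fix f assume "f \<in> H" then obtain a where a: "a \<in> H2" "f = U a" by (auto simp: H_def)
    show "disc_fun f" using a by (simp add: H2_disc U_H2)
    show "Mz f \<in> H" using a by (simp add: H_def U_S[symmetric] S_H2)
    show "Im (ip f f) = 0" "0 \<le> Re (ip f f)" using a by (simp_all add: ipU h2_inner_self_pos)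
  next
    show "(\<lambda>w. 0) \<in> H" unfolding H_def using U0 H2_zero(1) by (metis image_eqI)
  next
    fix f g assume "f \<in> H" "g \<in> H"
    then obtain a b where a: "a \<in> H2" "f = U a" and b: "b \<in> H2" "g = U b" by (auto simp: H_def)
    show "(\<lambda>w. f w + g w) \<in> H" using a b by (simp add: Uadd H_def H2_add(1))
    show "ip g f = cnj (ip f g)" using a b h2_inner_cnj[OF a(1) b(1)] by (simp add: ipU)
  next
    fix f c assume "f \<in> H"
    then obtain a where a: "a \<in> H2" "f = U a" by (auto simp: H_def)
    show "(\<lambda>w. c * f w) \<in> H" using a by (simp add: Uscale H_def H2_scale(1))
  next
    fix f g h assume "f \<in> H" "g \<in> H" "h \<in> H"
    then obtain a b d where a: "a \<in> H2" "f = U a" and b: "b \<in> H2" "g = U b" and d: "d \<in> H2" "h = U d"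
      by (auto simp: H_def)
    show "ip (\<lambda>w. f w + g w) h = ip f h + ip g h"
      using a b d by (simp add: Uadd ipU H2_add(1) h2_inner_add_left)
  next
    fix f g c assume "f \<in> H" "g \<in> H"
    then obtain a b where a: "a \<in> H2" "f = U a" and b: "b \<in> H2" "g = U b" by (auto simp: H_def)
    show "ip (\<lambda>w. c * f w) g = c * ip f g"
      using a b by (simp add: Uscale ipU H2_scale(1) h2_inner_scale_left)
  next
    fix f assume "f \<in> H" "ip f f = 0"
    then obtain a where a: "a \<in> H2" "f = U a" "h2_inner a a = 0" by (auto simp: H_def ipU)
    show "f = (\<lambda>w. 0)" using h2_inner_self_eq0[OF a(1,3)] a(2) U0 by simp
  next
    fix X :: "nat \<Rightarrow> complex \<Rightarrow> complex"
    assume asm: "(\<forall>i. X i \<in> H) \<and>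
          (\<forall>e>0. \<exists>N. \<forall>i\<ge>N. \<forall>j\<ge>N. sqrt (Re (ip (\<lambda>w. X i w - X j w) (\<lambda>w. X i w - X j w))) < e)"
    define Y where "Y = (\<lambda>i. inv_into H2 U (X i))"
    have Y: "Y i \<in> H2" "X i = U (Y i)" for i
      using asm by (auto simp: Y_def H_def inv_into_into f_inv_into_f)
    have d: "sqrt (Re (ip (\<lambda>w. X i w - L w) (\<lambda>w. X i w - L w))) = h2_norm (\<lambda>w. Y i w - M w)"
      if "L = U M" "M \<in> H2" for i L M
      using that Y by (simp add: Udiff normU H2_diff(1))
    have dd: "\<And>i j. sqrt (Re (ip (\<lambda>w. X i w - X j w) (\<lambda>w. X i w - X j w))) = h2_norm (\<lambda>w. Y i w - Y j w)"
      by (rule d[OF Y(2) Y(1)])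
    have "\<exists>N. \<forall>i\<ge>N. \<forall>j\<ge>N. h2_norm (\<lambda>w. Y i w - Y j w) < e" if "e > 0" for e
      using asm[THEN conjunct2, unfolded dd] that by blast
    then obtain L where L: "L \<in> H2" "(\<lambda>i. h2_norm (\<lambda>w. Y i w - L w)) \<longlonglongrightarrow> 0"
      using H2_complete[of Y] Y(1) by blast
    show "\<exists>L\<in>H. (\<lambda>i. sqrt (Re (ip (\<lambda>w. X i w - L w) (\<lambda>w. X i w - L w)))) \<longlonglongrightarrow> 0"
    proof (rule bexI[of _ "U L"])
      show "U L \<in> H" using L(1) by (simp add: H_def)
      show "(\<lambda>i. sqrt (Re (ip (\<lambda>w. X i w - U L w) (\<lambda>w. X i w - U L w)))) \<longlonglongrightarrow> 0"
        unfolding d[OF refl L(1)] by (rule L(2))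
    qed
  next
    fix w :: complex assume w: "w \<in> ball 0 1"
    show "(\<lambda>z. k z w) holomorphic_on ball 0 1"
      using H2_disc[OF U_H2[OF e_H2(1)[OF w]]] by (simp add: k_def disc_fun_def)
    show "onD (\<lambda>z. k z w) \<in> H"
      using Uout[OF e_H2(1)[OF w]] e_H2(1)[OF w] by (simp add: k_def H_def)
    fix f assume "f \<in> H"
    then obtain a where a: "a \<in> H2" "f = U a" by (auto simp: H_def)
    show "ip f (onD (\<lambda>z. k z w)) = f w"
      using a Uout[OF e_H2(1)[OF w]] eval_U[OF a(1) w] by (simp add: k_def ipU e_H2(1)[OF w])
  next
    fix zs :: "complex list" and c :: "nat \<Rightarrow> complex"
    assume zs: "set zs \<subseteq> ball 0 1"
    define m where "m = length zs"
    define E where "E = (\<lambda>w. \<Sum>i<m. c i * e (zs ! i) w)"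
    have eH: "e (zs ! i) \<in> H2" if "i < m" for i
      using that by (intro e_H2(1) subsetD[OF zs] nth_mem) (simp add: m_def)
    have EH: "E \<in> H2" unfolding E_def using H2_sum[of "{..<m}" "\<lambda>i. e (zs ! i)" c] eH by auto
    have kk: "k (zs ! j) (zs ! i) = h2_inner (e (zs ! i)) (e (zs ! j))" if "i < m" "j < m" for i j
      using that eval_U[OF eH[of i], of "zs ! j"] subsetD[OF zs nth_mem[of j zs]] by (simp add: k_def m_def)
    have "(\<Sum>i<m. \<Sum>j<m. c i * cnj (c j) * k (zs ! j) (zs ! i)) = h2_inner E E"
    proof -
      have "h2_inner E E = (\<Sum>i<m. c i * h2_inner (e (zs ! i)) E)"
      proof -
        have "h2_inner (\<lambda>w. \<Sum>i<m. c i * e (zs ! i) w) E = (\<Sum>i<m. c i * h2_inner (e (zs ! i)) E)"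
          by (rule h2_inner_sum_left) (auto intro: eH EH)
        then show ?thesis unfolding E_def[symmetric] .
      qed
      also have "\<dots> = (\<Sum>i<m. c i * (\<Sum>j<m. cnj (c j) * h2_inner (e (zs ! i)) (e (zs ! j))))"
      proof (intro sum.cong refl)
        fix x assume x: "x \<in> {..<m}"
        show "c x * h2_inner (e (zs ! x)) E = c x * (\<Sum>j<m. cnj (c j) * h2_inner (e (zs ! x)) (e (zs ! j)))"
          unfolding E_def using x by (subst h2_inner_sum_right) (auto intro: eH)
      qed
      also have "\<dots> = (\<Sum>i<m. \<Sum>j<m. c i * cnj (c j) * k (zs ! j) (zs ! i))"
        by (simp add: sum_distrib_left kk mult.assoc)
      finally show ?thesis by simp
    qed
    then show "let S = (\<Sum>i<length zs. \<Sum>j<length zs. c i * cnj (c j) * k (zs ! j) (zs ! i))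
         in Im S = 0 \<and> Re S \<ge> 0"
      using h2_inner_self_pos[OF EH] by (simp add: Let_def m_def)
  next
    obtain C where C: "\<forall>f\<in>H2. h2_norm (S f) \<le> C * h2_norm f" using S_bounded by blast
    have "sqrt (Re (ip (Mz f) (Mz f))) \<le> C * sqrt (Re (ip f f))" if fH: "f \<in> H" for f
    proof -
      obtain a where a: "a \<in> H2" "f = U a" using fH by (auto simp: H_def)
      show ?thesis using a C by (simp add: U_S[symmetric] normU S_H2)
    qed
    then show "\<exists>C. \<forall>f\<in>H. sqrt (Re (ip (Mz f) (Mz f))) \<le> C * sqrt (Re (ip f f))" by blast
  qed
  have ue: "unitarily_equiv_Mz S H ip"
    unfolding unitarily_equiv_Mz_def
    by (intro exI[of _ U] conjI ballI allI)
       (simp_all add: H_def linD(2)[OF U_lin] linD(3)[OF U_lin] ipU U_S)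
  show ?thesis using ahs ue by blast
qed

end

theorem lemma2p3:
  fixes n :: nat and F :: "(complex \<Rightarrow> complex) \<Rightarrow> (complex \<Rightarrow> complex)"
    and S :: "(complex \<Rightarrow> complex) \<Rightarrow> (complex \<Rightarrow> complex)"
  assumes "n \<ge> 1"
    and "n_perturbation n F"
    and "S = (\<lambda>f. (\<lambda>w. Mz f w + F f w))"
  shows "(\<forall>m\<ge>n. \<forall>f\<in>H2. F (\<lambda>w. w ^ m * f w) = (\<lambda>w. 0))
       \<and> (\<forall>f\<in>H2. \<forall>m\<ge>1. \<exists>p :: complex poly.
            (S ^^ m) f = (\<lambda>w. w ^ m * (f w + onD (poly p) w)))
       \<and> (\<exists>H ip k. analytic_hilbert_space H ip k \<and> unitarily_equiv_Mz S H ip)"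
proof -
  interpret P: pert n F using assms(1,2) by unfold_locales
  have SS: "S = P.S" using assms(3) by (simp add: P.S_def)
  show ?thesis unfolding SS using P.part_i P.part_ii P.part_iii by blast
qed


end
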